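(* Consider a discounted MDP with finite state space $\mathcal{S}$, finite action space $\mathcal{A}$, transition matrix $P\in\mathbb{R}_+^{|\mathcal{S}||\mathcal{A}|\times|\mathcal{S}|}$ with $P_{sa,\tilde s}=\Pr(\tilde s\mid s,a)$, initial state distribution $\mu_0$ and discount factor $\gamma\in[0,1)$, and a differentiable parametrized policy $\theta\mapsto\pi_\theta$ with $\theta\in\mathbb{R}^p$. Let $\Upsilon\in\mathbb{R}^{p\times|\mathcal{S}||\mathcal{A}|}$ be the matrix $\Upsilon_{i,sa}=\partial d_\theta(s,a)/\partial\theta_i$. Then $$\Upsilon=H_\theta\,\Delta(\Xi^\top d_{\mathcal{S},\theta})\,\Psi_\theta^{-1},$$ where $\Psi_\theta=I-\gamma P\Pi_\theta$.
   Context: The policy $\pi_\theta\in\mathbb{R}_+^{|\mathcal{S}||\mathcal{A}|}$ has entries $\pi_\theta(s,a)$, normalized in each state. $\Pi_\theta\in\mathbb{R}^{|\mathcal{S}|\times|\mathcal{S}||\mathcal{A}|}$ is block-diagonal with row $s$ containing $\pi_\theta(s,\cdot)^\top$ in the block of state $s$, so $(\Pi_\theta v)(s)=\sum_a\pi_\theta(s,a)v(s,a)$. $d_\theta(s,a)=(1-\gamma)\sum_{i\ge0}\gamma^i\Pr(S_i=s,A_i=a)$ is the discounted state-action visitation distribution with $S_0\sim\mu_0$, actions from $\pi_\theta$ and transitions from $P$; $d_{\mathcal{S},\theta}(s)=\sum_a d_\theta(s,a)$. $H_\theta\in\mathbb{R}^{p\times|\mathcal{S}||\mathcal{A}|}$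 is the actor Jacobian $(H_\theta)_{i,sa}=\partial\pi_\theta(s,a)/\partial\theta_i$. $\Xi\in\mathbb{R}^{|\mathcal{S}|\times|\mathcal{S}||\mathcal{A}|}$ is the marginalization matrix (block-diagonal with blocks $\mathbf{1}_{|\mathcal{A}|}^\top$), so $\Xi^\top d_{\mathcal{S},\theta}$ is the vector with $(s,a)$-entry $d_{\mathcal{S},\theta}(s)$. $\Delta(v)$ is the diagonal matrix with $v$ on its diagonal. *)

theory Defs
  imports "HOL-Analysis.Analysis"
begin

text \<open>State-action pairs are indexed by the finite type ('s \<times> 'a).
  Vectors/matrices are HOL-Analysis Cartesian vectors: an m\<times>n matrix is real^'n^'m.\<close>

text \<open>Pr(S_i = s, A_i = a) for the Markov chain with S_0 ~ mu0, A_i ~ pi(S_i,.),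
  S_{i+1} ~ P(S_i,A_i,.).\<close>
fun sa_prob :: "('s::finite \<Rightarrow> real) \<Rightarrow> ('s \<times> 'a::finite \<Rightarrow> 's \<Rightarrow> real)
      \<Rightarrow> ('s \<Rightarrow> 'a \<Rightarrow> real) \<Rightarrow> nat \<Rightarrow> 's \<times> 'a \<Rightarrow> real" where
  "sa_prob mu0 P pol 0 (s, a) = mu0 s * pol s a"
| "sa_prob mu0 P pol (Suc i) (s', a') =
     (\<Sum>sa\<in>UNIV. sa_prob mu0 P pol i sa * P sa s') * pol s' a'"

definition visit :: "real \<Rightarrow> ('s::finite \<Rightarrow> real) \<Rightarrow> ('s \<times> 'a::finite \<Rightarrow> 's \<Rightarrow> real)
      \<Rightarrow> ('s \<Rightarrow> 'a \<Rightarrow> real) \<Rightarrow> real^('s \<times> 'a)" where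
  "visit \<gamma> mu0 P pol = (\<chi> sa. (1 - \<gamma>) * (\<Sum>i. \<gamma> ^ i * sa_prob mu0 P pol i sa))"

definition visit_S :: "real \<Rightarrow> ('s::finite \<Rightarrow> real) \<Rightarrow> ('s \<times> 'a::finite \<Rightarrow> 's \<Rightarrow> real)
      \<Rightarrow> ('s \<Rightarrow> 'a \<Rightarrow> real) \<Rightarrow> real^'s" where
  "visit_S \<gamma> mu0 P pol = (\<chi> s. \<Sum>a\<in>UNIV. visit \<gamma> mu0 P pol $ (s, a))"

definition trans_mat :: "('s::finite \<times> 'a::finite \<Rightarrow> 's \<Rightarrow> real) \<Rightarrow> real^'s^('s \<times> 'a)" where
  "trans_mat P = (\<chi> sa s'. P sa s')"

definition policy_mat :: "('s::finite \<Rightarrow> 'a::finite \<Rightarrow> real) \<Rightarrow> real^('s \<times> 'a)^'s" where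
  "policy_mat pol = (\<chi> s sa. if fst sa = s then pol s (snd sa) else 0)"

definition marg_mat :: "real^('s::finite \<times> 'a::finite)^'s" where
  "marg_mat = (\<chi> s sa. if fst sa = s then 1 else 0)"

definition diag_mat :: "real^'n::finite \<Rightarrow> real^'n^'n" where
  "diag_mat v = (\<chi> i j. if i = j then v $ i else 0)"

definition partial_deriv :: "(real^'p::finite \<Rightarrow> real) \<Rightarrow> real^'p \<Rightarrow> 'p \<Rightarrow> real" where
  "partial_deriv f \<theta> i = deriv (\<lambda>t. f (\<theta> + t *\<^sub>R axis i 1)) 0"

definition actor_jacobian :: "(real^'p::finite \<Rightarrow> 's::finite \<Rightarrow> 'a::finite \<Rightarrow> real)
      \<Rightarrow> real^'p \<Rightarrow> real^('s \<times> 'a)^'p" where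
  "actor_jacobian pol \<theta> = (\<chi> i sa. partial_deriv (\<lambda>\<theta>'. pol \<theta>' (fst sa) (snd sa)) \<theta> i)"

end

theory Submission
  imports Defs
begin

lemma sum_UNIV_pair:
  "(\<Sum>x\<in>(UNIV::('s::finite\<times>'a::finite) set). f x) = (\<Sum>s\<in>UNIV. \<Sum>a\<in>UNIV. f (s,a))"
proof -
  have "(\<Sum>s\<in>UNIV. \<Sum>a\<in>UNIV. f (s,a)) = (\<Sum>x\<in>(UNIV::'s set) \<times> (UNIV::'a set). f x)"
    by (rule sum.cartesian_product'[symmetric])
  then show ?thesis by simp
qed

lemma sa_prob_nonneg:
  assumes "\<And>sa s'. P sa s' \<ge> 0" "\<And>s. mu0 s \<ge> 0" "\<And>s a. pol s a \<ge> 0"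
  shows "sa_prob mu0 P pol n sa \<ge> 0"
proof (induction n arbitrary: sa)
  case 0 then show ?case using assms by (cases sa) auto
next
  case (Suc n) then show ?case using assms by (cases sa) (auto intro!: sum_nonneg mult_nonneg_nonneg)
qed

lemma sa_prob_sum:
  assumes P_stoch: "\<And>sa. (\<Sum>s'\<in>UNIV. P sa s') = 1" and mu0_sum: "(\<Sum>s\<in>UNIV. mu0 s) = 1"
    and pi_sum: "\<And>s. (\<Sum>a\<in>UNIV. pol s a) = 1"
  shows "(\<Sum>sa\<in>UNIV. sa_prob mu0 P pol n sa) = 1"
proof (induction n)
  case 0
  have "(\<Sum>sa\<in>UNIV. sa_prob mu0 P pol 0 sa) = (\<Sum>s\<in>UNIV. \<Sum>a\<in>UNIV. mu0 s * pol s a)"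
    by (simp add: sum_UNIV_pair)
  also have "... = (\<Sum>s\<in>UNIV. mu0 s)" by (simp add: sum_distrib_left[symmetric] pi_sum)
  finally show ?case using mu0_sum by simp
next
  case (Suc n)
  have "(\<Sum>sa\<in>UNIV. sa_prob mu0 P pol (Suc n) sa) = (\<Sum>s'\<in>UNIV. \<Sum>a\<in>UNIV. (\<Sum>sa\<in>UNIV. sa_prob mu0 P pol n sa * P sa s') * pol s' a)"
    by (simp add: sum_UNIV_pair)
  also have "... = (\<Sum>s'\<in>UNIV. (\<Sum>sa\<in>UNIV. sa_prob mu0 P pol n sa * P sa s'))"
    by (simp add: sum_distrib_left[symmetric] pi_sum)
  also have "... = (\<Sum>sa\<in>UNIV. sa_prob mu0 P pol n sa * (\<Sum>s'\<in>UNIV. P sa s'))"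
    by (subst sum.swap) (simp add: sum_distrib_left)
  also have "... = 1" using Suc by (simp add: P_stoch)
  finally show ?case .
qed

lemma M_entry: "(trans_mat P ** policy_mat pol) $ k $ j = P k (fst j) * pol (fst j) (snd j)"
  unfolding matrix_matrix_mult_def trans_mat_def policy_mat_def
  by (simp add: if_distrib[where f="\<lambda>x. _ * x"] cong: if_cong)

lemma invertible_I_minus:
  fixes M :: "real^'n::finite^'n"
  assumes Mnn: "\<And>i j. M$i$j \<ge> 0" and Ms: "\<And>i. (\<Sum>j\<in>UNIV. M$i$j) = 1" and g: "0 \<le> g" "g < 1"
  shows "invertible (mat 1 - g *\<^sub>R M)"
proof -
  have "\<forall>x. (mat 1 - g *\<^sub>R M) *v x = 0 \<longrightarrow> x = 0"
  proof (intro allI impI)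
    fix x :: "real^'n"
    assume x0: "(mat 1 - g *\<^sub>R M) *v x = 0"
    have "(mat 1 - g *\<^sub>R M) *v x = x - g *\<^sub>R (M *v x)"
      by (simp add: matrix_vector_mult_diff_rdistrib scaleR_matrix_vector_assoc)
    then have xv: "x = g *\<^sub>R (M *v x)" using x0 by simp
    have xe: "x$i = g * (\<Sum>j\<in>UNIV. M$i$j * x$j)" for i
      by (subst xv) (simp add: matrix_vector_mult_def)
    define m where "m = Max (range (\<lambda>j. \<bar>x$j\<bar>))"
    have mge: "\<bar>x$j\<bar> \<le> m" for j unfolding m_def by (rule Max_ge) auto
    have "m \<in> range (\<lambda>j. \<bar>x$j\<bar>)" unfolding m_def by (rule Max_in) auto
    then obtain i where i: "\<bar>x$i\<bar> = m" by auto
    have s1: "\<bar>\<Sum>j\<in>UNIV. M$i$j * x$j\<bar> \<le> (\<Sum>j\<in>UNIV. M$i$j * m)"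
    proof -
      have "\<bar>M$i$j * x$j\<bar> \<le> M$i$j * m" for j
        using Mnn[of i j] mge[of j] by (simp add: abs_mult mult_left_mono)
      then show ?thesis by (intro order.trans[OF sum_abs] sum_mono)
    qed
    have s2: "(\<Sum>j\<in>UNIV. M$i$j * m) = m" by (simp add: sum_distrib_right[symmetric] Ms)
    have "m = g * \<bar>\<Sum>j\<in>UNIV. M$i$j * x$j\<bar>" using xe[of i] i g by (simp add: abs_mult)
    also have "... \<le> g * m" using s1 s2 g by (simp add: mult_left_mono)
    finally have "(1 - g) * m \<le> 0" by (simp add: algebra_simps)
    then have "m \<le> 0" using g by (simp add: mult_le_0_iff)
    then have "\<bar>x$j\<bar> \<le> 0" for j using mge[of j] by linarith
    then show "x = 0" by (simp add: vec_eq_iff)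
  qed
  then show ?thesis unfolding invertible_left_inverse matrix_left_invertible_ker by blast
qed

lemma matrix_inv_right:
  fixes A :: "real^'n::finite^'n"
  assumes "invertible A" shows "A ** matrix_inv A = mat 1"
  using someI_ex[OF assms[unfolded invertible_def]] unfolding matrix_inv_def by blast


lemma visit_props:
  assumes P_nonneg: "\<And>sa s'. P sa s' \<ge> 0"
    and P_stoch: "\<And>sa. (\<Sum>s'\<in>UNIV. P sa s') = 1"
    and mu0_nonneg: "\<And>s. mu0 s \<ge> 0"
    and mu0_sum: "(\<Sum>s\<in>UNIV. mu0 s) = 1"
    and gamma: "0 \<le> \<gamma>" "\<gamma> < 1"
    and pi_nonneg: "\<And>s a. pol s a \<ge> 0"
    and pi_sum: "\<And>s. (\<Sum>a\<in>UNIV. pol s a) = 1"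
  shows "visit \<gamma> mu0 P pol $ (s',a') = (1-\<gamma>) * (mu0 s' * pol s' a')
           + \<gamma> * (\<Sum>k\<in>UNIV. visit \<gamma> mu0 P pol $ k * P k s') * pol s' a'"
    and "\<bar>visit \<gamma> mu0 P pol $ k\<bar> \<le> 1"
proof -
  let ?p = "sa_prob mu0 P pol"
  have pnn: "\<And>n k. ?p n k \<ge> 0" by (rule sa_prob_nonneg) (use assms in auto)
  have ple: "\<And>n k. ?p n k \<le> 1"
  proof -
    fix n k
    have "?p n k \<le> (\<Sum>sa\<in>UNIV. ?p n sa)" by (rule member_le_sum) (auto simp: pnn)
    then show "?p n k \<le> 1" using sa_prob_sum[of P mu0 pol n] assms by simp
  qed
  have bnd: "\<And>n k. norm (\<gamma>^n * ?p n k) \<le> \<gamma>^n"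
    using gamma pnn ple by (auto simp: abs_mult intro!: mult_left_le)
  have sg: "summable (\<lambda>n. \<gamma>^n)" using gamma by (simp add: summable_geometric)
  have summ: "\<And>k. summable (\<lambda>n. \<gamma>^n * ?p n k)"
    by (rule summable_comparison_test[OF _ sg]) (use bnd in auto)
  have bnd2: "\<And>n k. norm (\<gamma>^n * ?p (Suc n) k) \<le> \<gamma>^n"
    using gamma pnn ple by (auto simp del: sa_prob.simps simp: abs_mult intro!: mult_left_le)
  have summ2: "\<And>k. summable (\<lambda>n. \<gamma>^n * ?p (Suc n) k)"
    by (rule summable_comparison_test[OF _ sg]) (use bnd2 in \<open>auto simp del: sa_prob.simps\<close>)
  have "(\<Sum>n. \<gamma>^n * ?p n (s',a')) = ?p 0 (s',a') + (\<Sum>n. \<gamma>^(Suc n) * ?p (Suc n) (s',a'))"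
    using suminf_split_head[OF summ[of "(s',a')"]] by simp
  also have "(\<Sum>n. \<gamma>^(Suc n) * ?p (Suc n) (s',a')) = \<gamma> * (\<Sum>n. \<gamma>^n * ?p (Suc n) (s',a'))"
    using suminf_mult[OF summ2[of "(s',a')"], of \<gamma>] by (simp add: mult.assoc)
  also have "(\<Sum>n. \<gamma>^n * ?p (Suc n) (s',a')) = (\<Sum>n. (\<Sum>k\<in>UNIV. \<gamma>^n * ?p n k * P k s') * pol s' a')"
    by (simp add: sum_distrib_left mult.assoc sum_distrib_right)
  also have "... = (\<Sum>n. (\<Sum>k\<in>UNIV. \<gamma>^n * ?p n k * P k s')) * pol s' a'"
    by (rule suminf_mult2[symmetric]) (auto intro!: summable_sum summable_mult2 summ)
  also have "(\<Sum>n. (\<Sum>k\<in>UNIV. \<gamma>^n * ?p n k * P k s')) = (\<Sum>k\<in>UNIV. (\<Sum>n. \<gamma>^n * ?p n k) * P k s')"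
    by (subst suminf_sum) (auto intro!: summable_mult2 summ sum.cong simp: suminf_mult2[OF summ])
  finally have fin: "(\<Sum>n. \<gamma>^n * ?p n (s',a')) = ?p 0 (s',a') + \<gamma> * ((\<Sum>k\<in>UNIV. (\<Sum>n. \<gamma>^n * ?p n k) * P k s') * pol s' a')" .
  show "visit \<gamma> mu0 P pol $ (s',a') = (1-\<gamma>) * (mu0 s' * pol s' a')
           + \<gamma> * (\<Sum>k\<in>UNIV. visit \<gamma> mu0 P pol $ k * P k s') * pol s' a'"
  proof -
    let ?S = "\<lambda>k. (\<Sum>n. \<gamma>^n * ?p n k)"
    have e1: "(1-\<gamma>) * ?S (s',a') = (1-\<gamma>) * (mu0 s' * pol s' a') + \<gamma> * ((1-\<gamma>) * (\<Sum>k\<in>UNIV. ?S k * P k s')) * pol s' a'"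
      using fin by (simp add: algebra_simps)
    have e2: "(\<Sum>k\<in>UNIV. ((1-\<gamma>) * ?S k) * P k s') = (1-\<gamma>) * (\<Sum>k\<in>UNIV. ?S k * P k s')"
      by (simp add: sum_distrib_left mult.assoc)
    show ?thesis unfolding visit_def using e1 e2 by simp
  qed
  have "(\<Sum>n. \<gamma>^n * ?p n k) \<le> (\<Sum>n. \<gamma>^n)"
  proof (rule suminf_le)
    fix n show "\<gamma>^n * ?p n k \<le> \<gamma>^n" using bnd[of n k] by (simp add: abs_le_iff)
  qed (rule summ, rule sg)
  also have "... = 1 / (1-\<gamma>)" using gamma by (simp add: suminf_geometric)
  finally have "(1-\<gamma>) * (\<Sum>n. \<gamma>^n * ?p n k) \<le> 1" using gamma by (simp add: field_simps)
  moreover have "(\<Sum>n. \<gamma>^n * ?p n k) \<ge> 0" by (rule suminf_nonneg[OF summ]) (use gamma pnn in auto)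
  ultimately show "\<bar>visit \<gamma> mu0 P pol $ k\<bar> \<le> 1" unfolding visit_def using gamma by simp
qed

lemma entry_test:
  fixes H :: "real^('s::finite\<times>'a::finite)^'p::finite" and Q :: "real^('s\<times>'a)^('s\<times>'a)" and dS :: "real^'s"
  shows "(H ** diag_mat (transpose marg_mat *v dS) ** Q) $ i $ j
        = (\<Sum>k\<in>UNIV. H $ i $ k * dS $ fst k * Q $ k $ j)"
proof -
  have d: "(transpose marg_mat *v dS) $ k = dS $ fst k" for k :: "'s\<times>'a"
  proof -
    have "(transpose marg_mat *v dS) $ k = (\<Sum>s\<in>UNIV. (if fst k = s then 1 else 0) * dS $ s)"
      by (simp add: matrix_vector_mult_def transpose_def marg_mat_def)
    also have "... = dS $ fst k" by (simp add: if_distrib[where f="\<lambda>y. y * _"] cong: if_cong)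
    finally show ?thesis .
  qed
  have e: "(H ** diag_mat (transpose marg_mat *v dS)) $ i $ k = H $ i $ k * dS $ fst k" for k
  proof -
    have "(H ** diag_mat (transpose marg_mat *v dS)) $ i $ k = (\<Sum>l\<in>UNIV. H $ i $ l * (if l = k then (transpose marg_mat *v dS) $ l else 0))"
      by (simp only: matrix_matrix_mult_def diag_mat_def vec_lambda_beta)
    also have "... = H $ i $ k * dS $ fst k" using d[of k] by (simp add: if_distrib[where f="\<lambda>y. _ * y"] cong: if_cong)
    finally show ?thesis .
  qed
  have "(H ** diag_mat (transpose marg_mat *v dS) ** Q) $ i $ j = (\<Sum>k\<in>UNIV. (H ** diag_mat (transpose marg_mat *v dS)) $ i $ k * Q $ k $ j)"
    by (simp only: matrix_matrix_mult_def vec_lambda_beta)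
  then show ?thesis by (simp only: e)
qed

theorem theorem2:
  fixes pol :: "real^'p::finite \<Rightarrow> 's::finite \<Rightarrow> 'a::finite \<Rightarrow> real"
    and P :: "'s \<times> 'a \<Rightarrow> 's \<Rightarrow> real"
    and mu0 :: "'s \<Rightarrow> real"
    and \<gamma> :: real
    and \<theta> :: "real^'p"
  assumes P_nonneg: "\<And>sa s'. P sa s' \<ge> 0"
    and P_stoch: "\<And>sa. (\<Sum>s'\<in>UNIV. P sa s') = 1"
    and mu0_nonneg: "\<And>s. mu0 s \<ge> 0"
    and mu0_sum: "(\<Sum>s\<in>UNIV. mu0 s) = 1"
    and gamma: "0 \<le> \<gamma>" "\<gamma> < 1"
    and pi_nonneg: "\<And>\<theta>' s a. pol \<theta>' s a \<ge> 0"
    and pi_sum: "\<And>\<theta>' s. (\<Sum>a\<in>UNIV. pol \<theta>' s a) = 1"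
    and pi_diff: "\<And>\<theta>' s a. (\<lambda>x. pol x s a) differentiable (at \<theta>')"
  shows "let \<Psi> = mat 1 - \<gamma> *\<^sub>R (trans_mat P ** policy_mat (pol \<theta>));
             \<Upsilon> = actor_jacobian pol \<theta>
                 ** diag_mat (transpose marg_mat *v visit_S \<gamma> mu0 P (pol \<theta>))
                 ** matrix_inv \<Psi>
         in \<forall>i sa. ((\<lambda>t. visit \<gamma> mu0 P (pol (\<theta> + t *\<^sub>R axis i 1)) $ sa)
                       has_real_derivative (\<Upsilon> $ i $ sa)) (at 0)"
proof -
  define M0 where "M0 = trans_mat P ** policy_mat (pol \<theta>)"
  define Psi where "Psi = mat 1 - \<gamma> *\<^sub>R M0"
  have M0e: "\<And>k j. M0 $ k $ j = P k (fst j) * pol \<theta> (fst j) (snd j)"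
    unfolding M0_def by (rule M_entry)
  have inv: "invertible Psi" unfolding Psi_def
  proof (rule invertible_I_minus)
    show "\<And>i j. 0 \<le> M0 $ i $ j" using P_nonneg pi_nonneg by (simp add: M0e)
    show "\<And>i. (\<Sum>j\<in>UNIV. M0 $ i $ j) = 1"
      by (simp add: M0e sum_UNIV_pair sum_distrib_left[symmetric] pi_sum P_stoch)
  qed (use gamma in auto)
  define Q where "Q = matrix_inv Psi"
  have PQ: "Psi ** Q = mat 1" unfolding Q_def by (rule matrix_inv_right[OF inv])
  define D0 where "D0 = visit \<gamma> mu0 P (pol \<theta>)"
  define dS where "dS = visit_S \<gamma> mu0 P (pol \<theta>)"
  have fix0: "\<And>s a. D0 $ (s,a) = (1-\<gamma>) * (mu0 s * pol \<theta> s a)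
           + \<gamma> * (\<Sum>k\<in>UNIV. D0 $ k * P k s) * pol \<theta> s a"
    unfolding D0_def by (rule visit_props(1)) (use assms in auto)
  have dS_eq: "\<And>s. dS $ s = (1-\<gamma>) * mu0 s + \<gamma> * (\<Sum>k\<in>UNIV. D0 $ k * P k s)"
  proof -
    fix s
    have "dS $ s = (\<Sum>a\<in>UNIV. D0 $ (s,a))" unfolding dS_def visit_S_def D0_def by simp
    also have "... = (\<Sum>a\<in>UNIV. ((1-\<gamma>) * mu0 s + \<gamma> * (\<Sum>k\<in>UNIV. D0 $ k * P k s)) * pol \<theta> s a)"
      by (rule sum.cong) (auto simp: fix0 algebra_simps)
    also have "... = (1-\<gamma>) * mu0 s + \<gamma> * (\<Sum>k\<in>UNIV. D0 $ k * P k s)"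
      by (simp add: sum_distrib_left[symmetric] pi_sum)
    finally show "dS $ s = (1-\<gamma>) * mu0 s + \<gamma> * (\<Sum>k\<in>UNIV. D0 $ k * P k s)" .
  qed
  have main: "((\<lambda>t. visit \<gamma> mu0 P (pol (\<theta> + t *\<^sub>R axis i 1)) $ j) has_real_derivative
      (\<Sum>k\<in>UNIV. actor_jacobian pol \<theta> $ i $ k * dS $ fst k * Q $ k $ j)) (at 0)" for i j
  proof -
    define pt where "pt t = pol (\<theta> + t *\<^sub>R axis i 1)" for t
    define Dt where "Dt t = visit \<gamma> mu0 P (pt t)" for t
    define e where "e t s = (1-\<gamma>)*mu0 s + \<gamma>*(\<Sum>k\<in>UNIV. Dt t $ k * P k s)" for t s
    define dp where "dp t k = pt t (fst k) (snd k) - pol \<theta> (fst k) (snd k)" for t k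
    have pt0: "pt 0 = pol \<theta>" unfolding pt_def by simp
    have Dt0: "Dt 0 = D0" unfolding Dt_def D0_def pt0 ..
    have fixt: "\<And>t s a. Dt t $ (s,a) = (1-\<gamma>) * (mu0 s * pt t s a)
           + \<gamma> * (\<Sum>k\<in>UNIV. Dt t $ k * P k s) * pt t s a"
      unfolding Dt_def pt_def by (rule visit_props(1)) (use assms in auto)
    have Dbnd: "\<And>t k. \<bar>Dt t $ k\<bar> \<le> 1"
      unfolding Dt_def pt_def by (rule visit_props(2)) (use assms in auto)
    have hder: "\<And>k. ((\<lambda>t. pt t (fst k) (snd k)) has_real_derivative (actor_jacobian pol \<theta> $ i $ k)) (at 0)"
    proof -
      fix k :: "'s \<times> 'a"
      have "(\<lambda>t. pol (\<theta> + t *\<^sub>R axis i 1) (fst k) (snd k)) differentiable (at 0)"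
        by (rule differentiable_compose[of "\<lambda>x. pol x (fst k) (snd k)"]) (auto intro!: pi_diff derivative_intros)
      then show "((\<lambda>t. pt t (fst k) (snd k)) has_real_derivative (actor_jacobian pol \<theta> $ i $ k)) (at 0)"
        unfolding pt_def actor_jacobian_def partial_deriv_def
        by (simp add: DERIV_deriv_iff_real_differentiable)
    qed
    have cont: "\<And>k. ((\<lambda>t. dp t k) \<longlongrightarrow> 0) (at 0)"
    proof -
      fix k
      have "isCont (\<lambda>t. pt t (fst k) (snd k)) 0" by (rule DERIV_isCont[OF hder])
      then show "((\<lambda>t. dp t k) \<longlongrightarrow> 0) (at 0)" unfolding dp_def isCont_def
        by (simp add: pt0 LIM_zero_iff)
    qed
    have ident: "Dt t $ jj - D0 $ jj = (\<Sum>k\<in>UNIV. e t (fst k) * dp t k * Q $ k $ jj)" for t jj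
    proof -
      define w where "w = (\<chi> k. e t (fst k) * dp t k)"
      have "(Dt t - D0) v* Psi = w"
      proof (rule vec_eq_iff[THEN iffD2], rule allI)
        fix l :: "'s \<times> 'a"
        obtain s a where l: "l = (s,a)" by (cases l)
        have "((Dt t - D0) v* Psi) $ l = (Dt t $ l - D0 $ l) - \<gamma> * pol \<theta> s a * (\<Sum>k\<in>UNIV. (Dt t $ k - D0 $ k) * P k s)"
        proof -
          have "((Dt t - D0) v* Psi) $ l = (\<Sum>k\<in>UNIV. Psi$k$l * (Dt t $ k - D0 $ k))"
            by (simp add: vector_matrix_mult_def mult.commute)
          also have "... = (\<Sum>k\<in>UNIV. (if k = l then 1 else 0) * (Dt t $ k - D0 $ k) - \<gamma> * M0$k$l * (Dt t $ k - D0 $ k))"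
            by (rule sum.cong) (auto simp: Psi_def mat_def algebra_simps)
          also have "... = (\<Sum>k\<in>UNIV. (if k = l then 1 else 0) * (Dt t $ k - D0 $ k))
              - (\<Sum>k\<in>UNIV. \<gamma> * M0$k$l * (Dt t $ k - D0 $ k))"
            by (rule sum_subtractf)
          also have "... = (Dt t $ l - D0 $ l) - \<gamma> * pol \<theta> s a * (\<Sum>k\<in>UNIV. (Dt t $ k - D0 $ k) * P k s)"
          proof -
            have "(\<Sum>k\<in>UNIV. (if k = l then 1 else 0) * (Dt t $ k - D0 $ k)) = Dt t $ l - D0 $ l"
              by (simp add: if_distrib[where f="\<lambda>y. y * _"] cong: if_cong)
            moreover have "(\<Sum>k\<in>UNIV. \<gamma> * M0$k$l * (Dt t $ k - D0 $ k)) = \<gamma> * pol \<theta> s a * (\<Sum>k\<in>UNIV. (Dt t $ k - D0 $ k) * P k s)"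
              by (simp add: M0e l sum_distrib_left mult_ac)
            ultimately show ?thesis by simp
          qed
          finally show ?thesis .
        qed
        also have "... = w $ l"
        proof -
          define St where "St = (\<Sum>k\<in>UNIV. Dt t $ k * P k s)"
          define S0 where "S0 = (\<Sum>k\<in>UNIV. D0 $ k * P k s)"
          have sd: "(\<Sum>k\<in>UNIV. (Dt t $ k - D0 $ k) * P k s) = St - S0"
            unfolding St_def S0_def by (simp add: left_diff_distrib sum_subtractf)
          have wl: "w $ l = ((1-\<gamma>)*mu0 s + \<gamma>*St) * (pt t s a - pol \<theta> s a)"
            unfolding w_def e_def dp_def l St_def by simp
          have f1: "Dt t $ l = (1-\<gamma>) * (mu0 s * pt t s a) + \<gamma> * St * pt t s a"
            unfolding St_def l by (rule fixt)
          have f2: "D0 $ l = (1-\<gamma>) * (mu0 s * pol \<theta> s a) + \<gamma> * S0 * pol \<theta> s a"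
            unfolding S0_def l by (rule fix0)
          show ?thesis unfolding sd wl f1 f2 by (simp add: algebra_simps)
        qed
        finally show "((Dt t - D0) v* Psi) $ l = w $ l" .
      qed
      then have "Dt t - D0 = w v* Q"
        by (metis PQ vector_matrix_mul_assoc vector_matrix_mul_rid)
      then have "(Dt t - D0) $ jj = (w v* Q) $ jj" by (rule arg_cong)
      then show ?thesis unfolding w_def by (simp add: vector_matrix_mult_def mult_ac)
    qed
    define B where "B s = (1-\<gamma>) * mu0 s + \<gamma> * (\<Sum>k\<in>UNIV. P k s)" for s
    have ebnd: "\<bar>e t s\<bar> \<le> B s" for t s
    proof -
      have "\<bar>\<Sum>k\<in>UNIV. Dt t $ k * P k s\<bar> \<le> (\<Sum>k\<in>UNIV. P k s)"
      proof -
        have "\<And>k. \<bar>Dt t $ k * P k s\<bar> \<le> P k s"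
          using Dbnd P_nonneg by (simp add: abs_mult mult_left_le_one_le)
        then show ?thesis by (intro order.trans[OF sum_abs] sum_mono)
      qed
      then have sb: "\<gamma> * \<bar>\<Sum>k\<in>UNIV. Dt t $ k * P k s\<bar> \<le> \<gamma> * (\<Sum>k\<in>UNIV. P k s)"
        using gamma by (intro mult_left_mono) auto
      have "\<bar>e t s\<bar> \<le> \<bar>(1-\<gamma>)*mu0 s\<bar> + \<bar>\<gamma> * (\<Sum>k\<in>UNIV. Dt t $ k * P k s)\<bar>"
        unfolding e_def by (rule abs_triangle_ineq)
      also have "... = (1-\<gamma>)*mu0 s + \<gamma> * \<bar>\<Sum>k\<in>UNIV. Dt t $ k * P k s\<bar>"
        using gamma mu0_nonneg[of s] by (simp add: abs_mult)
      also have "... \<le> B s" unfolding B_def using sb by simp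
      finally show ?thesis .
    qed
    have Dlim: "((\<lambda>t. Dt t $ l) \<longlongrightarrow> D0 $ l) (at 0)" for l
    proof -
      have "((\<lambda>t. Dt t $ l - D0 $ l) \<longlongrightarrow> 0) (at 0)"
      proof (rule Lim_null_comparison)
        show "\<forall>\<^sub>F t in at 0. norm (Dt t $ l - D0 $ l) \<le> (\<Sum>k\<in>UNIV. B (fst k) * \<bar>dp t k\<bar> * \<bar>Q $ k $ l\<bar>)"
        proof (rule always_eventually, rule allI)
          fix t
          have "norm (Dt t $ l - D0 $ l) \<le> (\<Sum>k\<in>UNIV. \<bar>e t (fst k) * dp t k * Q $ k $ l\<bar>)"
            unfolding ident real_norm_def by (rule sum_abs)
          also have "... \<le> (\<Sum>k\<in>UNIV. B (fst k) * \<bar>dp t k\<bar> * \<bar>Q $ k $ l\<bar>)"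
            by (rule sum_mono) (auto simp: abs_mult intro!: mult_right_mono ebnd)
          finally show "norm (Dt t $ l - D0 $ l) \<le> (\<Sum>k\<in>UNIV. B (fst k) * \<bar>dp t k\<bar> * \<bar>Q $ k $ l\<bar>)" .
        qed
        have "((\<lambda>t. \<Sum>k\<in>UNIV. B (fst k) * \<bar>dp t k\<bar> * \<bar>Q $ k $ l\<bar>) \<longlongrightarrow> (\<Sum>k\<in>UNIV. B (fst k) * \<bar>0\<bar> * \<bar>Q $ k $ l\<bar>)) (at 0)"
          by (intro tendsto_intros cont)
        then show "((\<lambda>t. \<Sum>k\<in>UNIV. B (fst k) * \<bar>dp t k\<bar> * \<bar>Q $ k $ l\<bar>) \<longlongrightarrow> 0) (at 0)" by simp
      qed
      then show ?thesis by (simp add: LIM_zero_iff)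
    qed
    have elim: "((\<lambda>t. e t s) \<longlongrightarrow> dS $ s) (at 0)" for s
      unfolding e_def dS_eq by (intro tendsto_intros Dlim)
    have qlim: "((\<lambda>t. dp t k / t) \<longlongrightarrow> actor_jacobian pol \<theta> $ i $ k) (at 0)" for k
      using hder[of k] unfolding has_field_derivative_iff dp_def by (simp add: pt0)
    have "((\<lambda>t. (Dt t $ j - Dt 0 $ j) / (t - 0)) \<longlongrightarrow>
        (\<Sum>k\<in>UNIV. dS $ fst k * actor_jacobian pol \<theta> $ i $ k * Q $ k $ j)) (at 0)"
    proof -
      have eq: "(Dt t $ j - Dt 0 $ j) / (t - 0) = (\<Sum>k\<in>UNIV. e t (fst k) * (dp t k / t) * Q $ k $ j)" for t
        unfolding Dt0 ident by (simp add: sum_divide_distrib)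
      show ?thesis unfolding eq by (intro tendsto_intros elim qlim)
    qed
    then have "((\<lambda>t. Dt t $ j) has_real_derivative
        (\<Sum>k\<in>UNIV. dS $ fst k * actor_jacobian pol \<theta> $ i $ k * Q $ k $ j)) (at 0)"
      unfolding has_field_derivative_iff .
    then show ?thesis unfolding Dt_def pt_def by (simp add: mult_ac)
  qed
  show ?thesis
    unfolding Let_def M0_def[symmetric] Psi_def[symmetric] Q_def[symmetric] dS_def[symmetric]
  proof (intro allI)
    fix i j
    have "(actor_jacobian pol \<theta> ** diag_mat (transpose marg_mat *v dS) ** Q) $ i $ j
        = (\<Sum>k\<in>UNIV. actor_jacobian pol \<theta> $ i $ k * dS $ fst k * Q $ k $ j)"
      by (rule entry_test)
    then show "((\<lambda>t. visit \<gamma> mu0 P (pol (\<theta> + t *\<^sub>R axis i 1)) $ j) has_real_derivative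
        (actor_jacobian pol \<theta> ** diag_mat (transpose marg_mat *v dS) ** Q) $ i $ j) (at 0)"
      using main[of i j] by (simp only:)
  qed
qed

end
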